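(* Let $X_1\subset X_0$ be Banach spaces with continuous embedding, $q\in[1,\infty]$, and set $X_\theta:=(X_0,X_1)_{\theta,q}$ for $\theta\in(0,1)$ (real interpolation). Let $0<\theta_1<\theta_2<\cdots<\theta_n<1$ be fixed. Suppose $l\in X_0'$ satisfies, for some $C_0,C_1,\varepsilon>0$, $$|l(f)|\le C_0\|f\|_{X_0}\quad\forall f\in X_0,\qquad |l(f)|\le C_1\Big[\sum_{i=1}^n\varepsilon^{\theta_i}\|f\|_{X_{\theta_i}}+\varepsilon\|f\|_{X_1}\Big]\quad\forall f\in X_1.$$ Then there is a constant $C>0$, depending on $C_0,C_1$, the $\theta_i$, $q$ and the spaces but independent of $\varepsilon$, such that $|l(f)|\le C\varepsilon^{\theta_1}\|f\|_{X_{\theta_1}}$ for all $f\in X_{\theta_1}$.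
   Context: $(X_0,X_1)_{\theta,q}$ denotes the real ($K$-method) interpolation space with $K(t,f)=\inf_{g\in X_1}(\|f-g\|_{X_0}+t\|g\|_{X_1})$. *)

theory Defs
  imports "HOL-Analysis.Analysis"
begin

text \<open>X_0 is modelled as the Banach space type 'a (with its norm). X_1 is a subset S of 'a
with its own norm n1; it is a linear subspace, n1 is a complete norm on S, and the
embedding S \<hookrightarrow> 'a is continuous.\<close>

definition banach_subspace :: "'a::banach set \<Rightarrow> ('a \<Rightarrow> real) \<Rightarrow> bool" where
  "banach_subspace S n1 \<longleftrightarrow>
     subspace S \<and>
     (\<forall>x\<in>S. 0 \<le> n1 x) \<and>
     (\<forall>x\<in>S. n1 x = 0 \<longleftrightarrow> x = 0) \<and>
     (\<forall>x\<in>S. \<forall>c::real. n1 (c *\<^sub>R x) = \<bar>c\<bar> * n1 x) \<and>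
     (\<forall>x\<in>S. \<forall>y\<in>S. n1 (x + y) \<le> n1 x + n1 y) \<and>
     (\<forall>u::nat \<Rightarrow> 'a. (\<forall>k. u k \<in> S) \<and>
         (\<forall>e>0. \<exists>N. \<forall>m\<ge>N. \<forall>k\<ge>N. n1 (u m - u k) < e) \<longrightarrow>
         (\<exists>x\<in>S. (\<lambda>k. n1 (u k - x)) \<longlonglongrightarrow> 0)) \<and>
     (\<exists>c. \<forall>x\<in>S. norm x \<le> c * n1 x)"

definition Kfun :: "'a::banach set \<Rightarrow> ('a \<Rightarrow> real) \<Rightarrow> real \<Rightarrow> 'a \<Rightarrow> real" where
  "Kfun S n1 t f = Inf ((\<lambda>g. norm (f - g) + t * n1 g) ` S)"

text \<open>Norm of (X_0,X_1)_{\<theta>,q}, valued in [0,\<infinity>]; q \<in> [1,\<infinity>] as an ennreal.\<close>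
definition interp_norm :: "'a::banach set \<Rightarrow> ('a \<Rightarrow> real) \<Rightarrow> real \<Rightarrow> ennreal \<Rightarrow> 'a \<Rightarrow> ennreal" where
  "interp_norm S n1 \<theta> q f =
     (if q = \<infinity> then (SUP t\<in>{0<..}. ennreal (t powr (-\<theta>) * Kfun S n1 t f))
      else (let I = (\<integral>\<^sup>+ t\<in>{0<..}. ennreal ((t powr (-\<theta>) * Kfun S n1 t f) powr (enn2real q) / t) \<partial>lborel)
            in if I = \<infinity> then \<infinity> else ennreal ((enn2real I) powr (1 / enn2real q))))"

definition interp_space :: "'a::banach set \<Rightarrow> ('a \<Rightarrow> real) \<Rightarrow> real \<Rightarrow> ennreal \<Rightarrow> 'a set" where
  "interp_space S n1 \<theta> q = {f. interp_norm S n1 \<theta> q f < \<infinity>}"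

abbreviation interp_nrm :: "'a::banach set \<Rightarrow> ('a \<Rightarrow> real) \<Rightarrow> real \<Rightarrow> ennreal \<Rightarrow> 'a \<Rightarrow> real" where
  "interp_nrm S n1 \<theta> q f \<equiv> enn2real (interp_norm S n1 \<theta> q f)"

end

theory Submission
  imports Defs
begin


lemma bs_props:
  assumes "banach_subspace S n1"
  shows "0 \<in> S" "\<And>x. x \<in> S \<Longrightarrow> 0 \<le> n1 x" "\<exists>c>0. \<forall>x\<in>S. norm x \<le> c * n1 x"
proof -
  show "0 \<in> S" using assms unfolding banach_subspace_def by (auto simp: subspace_def)
  show "\<And>x. x \<in> S \<Longrightarrow> 0 \<le> n1 x" using assms unfolding banach_subspace_def by auto
  obtain c where c: "\<forall>x\<in>S. norm x \<le> c * n1 x" using assms unfolding banach_subspace_def by auto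
  have "\<forall>x\<in>S. norm x \<le> max c 1 * n1 x"
  proof
    fix x assume x: "x \<in> S"
    have "0 \<le> n1 x" using assms x unfolding banach_subspace_def by auto
    then have "c * n1 x \<le> max c 1 * n1 x" by (intro mult_right_mono) auto
    with c x show "norm x \<le> max c 1 * n1 x" by auto
  qed
  then show "\<exists>c>0. \<forall>x\<in>S. norm x \<le> c * n1 x" by (intro exI[of _ "max c 1"]) auto
qed

context
  fixes S :: "'a::banach set" and n1
  assumes bs: "banach_subspace S n1"
begin

lemma K_le: "g \<in> S \<Longrightarrow> 0 \<le> t \<Longrightarrow> Kfun S n1 t h \<le> norm (h - g) + t * n1 g"
  unfolding Kfun_def
  by (rule cInf_lower) (auto intro!: bdd_belowI[of _ 0] simp: bs_props[OF bs])

lemma K_nonneg: "0 \<le> t \<Longrightarrow> 0 \<le> Kfun S n1 t h"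
  unfolding Kfun_def using bs_props[OF bs]
  by (intro cInf_greatest) auto

lemma K_less: "0 \<le> t \<Longrightarrow> Kfun S n1 t h < x \<Longrightarrow> \<exists>g\<in>S. norm (h - g) + t * n1 g < x"
proof -
  assume t: "0 \<le> t" and l: "Kfun S n1 t h < x"
  have ne: "(\<lambda>g. norm (h - g) + t * n1 g) ` S \<noteq> {}" using bs_props(1)[OF bs] by auto
  have bb: "bdd_below ((\<lambda>g. norm (h - g) + t * n1 g) ` S)"
    using t bs_props(2)[OF bs] by (intro bdd_belowI[of _ 0]) auto
  from l[unfolded Kfun_def] cInf_less_iff[OF ne bb] show ?thesis by auto
qed

lemma K_greatest: "0 \<le> t \<Longrightarrow> (\<And>g. g \<in> S \<Longrightarrow> y \<le> norm (h - g) + t * n1 g) \<Longrightarrow> y \<le> Kfun S n1 t h"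
  unfolding Kfun_def using bs_props(1)[OF bs]
  by (intro cInf_greatest) auto

lemma K_mono: "0 \<le> s \<Longrightarrow> s \<le> t \<Longrightarrow> Kfun S n1 s h \<le> Kfun S n1 t h"
proof (rule K_greatest)
  fix g assume "g \<in> S" "0 \<le> s" "s \<le> t"
  then have "Kfun S n1 s h \<le> norm (h - g) + s * n1 g" by (intro K_le) auto
  also have "\<dots> \<le> norm (h - g) + t * n1 g"
    using \<open>s \<le> t\<close> bs_props(2)[OF bs \<open>g \<in> S\<close>] by (simp add: mult_right_mono)
  finally show "Kfun S n1 s h \<le> norm (h - g) + t * n1 g" .
qed simp

lemma K_scale: "0 < s \<Longrightarrow> s \<le> t \<Longrightarrow> Kfun S n1 t h \<le> (t / s) * Kfun S n1 s h"
proof -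
  assume st: "0 < s" "s \<le> t"
  have "Kfun S n1 t h / (t / s) \<le> Kfun S n1 s h"
  proof (rule K_greatest)
    fix g assume g: "g \<in> S"
    have "Kfun S n1 t h \<le> norm (h - g) + t * n1 g" using g st by (intro K_le) auto
    also have "\<dots> \<le> (t / s) * (norm (h - g) + s * n1 g)"
      using st by (simp add: field_simps mult_right_mono)
    finally show "Kfun S n1 t h / (t / s) \<le> norm (h - g) + s * n1 g"
      using st by (simp add: field_simps)
  qed (use st in auto)
  then show ?thesis using st by (simp add: field_simps)
qed

lemma K_self: "g \<in> S \<Longrightarrow> 0 \<le> t \<Longrightarrow> Kfun S n1 t g \<le> t * n1 g"
  using K_le[of g t g] by simp

lemma K_tri: "0 \<le> t \<Longrightarrow> Kfun S n1 t g \<le> Kfun S n1 t f + norm (f - g)"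
proof -
  assume t: "0 \<le> t"
  have "Kfun S n1 t g - norm (f - g) \<le> Kfun S n1 t f"
  proof (rule K_greatest[OF t])
    fix h assume h: "h \<in> S"
    have "Kfun S n1 t g \<le> norm (g - h) + t * n1 h" using h t by (intro K_le)
    also have "norm (g - h) \<le> norm (f - g) + norm (f - h)"
      using norm_triangle_ineq4[of "f - h" "f - g"] by (simp add: norm_minus_commute algebra_simps)
    finally show "Kfun S n1 t g - norm (f - g) \<le> norm (f - h) + t * n1 h" by simp
  qed
  then show ?thesis by simp
qed

lemma K_zero: "Kfun S n1 1 f = 0 \<Longrightarrow> f = 0"
proof -
  assume K0: "Kfun S n1 1 f = 0"
  obtain c where c: "c > 0" "\<forall>x\<in>S. norm x \<le> c * n1 x" using bs_props(3)[OF bs] by auto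
  have "norm f \<le> (1 + c) * d" if d: "d > 0" for d
  proof -
    obtain g where g: "g \<in> S" "norm (f - g) + 1 * n1 g < d" using K_less[of 1 f d] K0 d by auto
    have "norm f \<le> norm (f - g) + norm g" using norm_triangle_ineq[of "f - g" g] by simp
    also have "\<dots> \<le> norm (f - g) + c * n1 g" using c g by auto
    also have "\<dots> \<le> (1 + c) * d"
    proof -
      have "c * n1 g \<le> c * d" using g c bs_props(2)[OF bs g(1)] norm_ge_zero[of "f - g"]
        by (intro mult_left_mono) linarith+
      moreover have "norm (f - g) \<le> d" using g bs_props(2)[OF bs g(1)] by auto
      ultimately show ?thesis by (simp add: distrib_right)
    qed
    finally show ?thesis .
  qed
  then have "norm f / (1 + c) \<le> d" if "d > 0" for d
  proof -
    have "norm f \<le> (1 + c) * d" using that by (rule \<open>\<And>d. d > 0 \<Longrightarrow> _\<close>)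
    then show ?thesis using c by (simp add: pos_divide_le_eq mult.commute)
  qed
  note * = this
  have "norm f / (1 + c) \<le> 0"
  proof (rule field_le_epsilon)
    fix e :: real assume "0 < e" then show "norm f / (1 + c) \<le> 0 + e" using * by simp
  qed
  then have "norm f \<le> 0" using c by (simp add: divide_le_0_iff)
  then show ?thesis by simp
qed

end


lemma J1:
  fixes r e c :: real
  assumes r: "r > 0" and e: "e > 0" and c: "c \<ge> 0"
  shows "(\<integral>\<^sup>+ t. ennreal (c * t powr (r - 1)) * indicator {0<..e} t \<partial>lborel) \<le> ennreal (c * (e powr r / r))"
proof -
  have h: "((\<lambda>x. x powr (r - 1)) has_integral (e powr (r - 1 + 1) / (r - 1 + 1))) {0..e}"
    using r e by (intro has_integral_powr_from_0) auto
  have h2: "((\<lambda>x. c * x powr (r - 1)) has_integral (c * (e powr r / r))) {0..e}"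
    using has_integral_mult_right[OF h, of c] by simp
  have eq: "(\<integral>\<^sup>+ x. ennreal (indicator {0..e} x * (c * x powr (r - 1))) \<partial>lborel) = ennreal (c * (e powr r / r))"
    using nn_integral_has_integral_lebesgue[OF _ h2] c by simp
  have "(\<integral>\<^sup>+ t. ennreal (c * t powr (r - 1)) * indicator {0<..e} t \<partial>lborel)
      \<le> (\<integral>\<^sup>+ x. ennreal (indicator {0..e} x * (c * x powr (r - 1))) \<partial>lborel)"
    by (intro nn_integral_mono) (auto simp: indicator_def)
  then show ?thesis using eq by simp
qed

lemma J2:
  fixes a e c :: real
  assumes "e < -1" "a > 0" "c \<ge> 0"
  shows "(\<integral>\<^sup>+ t. ennreal (c * t powr e) * indicator {a..} t \<partial>lborel) = ennreal (c * (-(a powr (e+1)) / (e+1)))"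
proof -
  have h2: "((\<lambda>x. c * x powr e) has_integral (c * (-(a powr (e+1)) / (e+1)))) {a..}"
    using has_integral_mult_right[OF has_integral_powr_to_inf[OF assms(1,2)], of c] by simp
  have eq: "(\<integral>\<^sup>+ x. ennreal (indicator {a..} x * (c * x powr e)) \<partial>lborel) = ennreal (c * (-(a powr (e+1)) / (e+1)))"
    using nn_integral_has_integral_lebesgue[OF _ h2] assms by simp
  have "(\<integral>\<^sup>+ t. ennreal (c * t powr e) * indicator {a..} t \<partial>lborel)
      = (\<integral>\<^sup>+ x. ennreal (indicator {a..} x * (c * x powr e)) \<partial>lborel)"
    by (intro nn_integral_cong) (auto simp: indicator_def)
  then show ?thesis using eq by simp
qed

definition Ii :: "'a::banach set \<Rightarrow> ('a \<Rightarrow> real) \<Rightarrow> real \<Rightarrow> real \<Rightarrow> 'a \<Rightarrow> ennreal" where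
  "Ii S n1 \<theta> p h = (\<integral>\<^sup>+ t\<in>{0<..}. ennreal ((t powr (-\<theta>) * Kfun S n1 t h) powr p / t) \<partial>lborel)"

lemma interp_norm_fin:
  "q \<noteq> \<infinity> \<Longrightarrow> interp_norm S n1 \<theta> q h =
     (if Ii S n1 \<theta> (enn2real q) h = \<infinity> then \<infinity> else ennreal ((enn2real (Ii S n1 \<theta> (enn2real q) h)) powr (1 / enn2real q)))"
  unfolding interp_norm_def Ii_def Let_def by simp

context
  fixes S :: "'a::banach set" and n1
  assumes bs: "banach_subspace S n1"
begin

lemma E_fin:
  assumes p: "p \<ge> 1" and th: "0 < \<theta>" and fin: "Ii S n1 \<theta> p f \<noteq> \<infinity>" and t: "t > 0"
  shows "t powr (-\<theta>) * Kfun S n1 t f \<le> (\<theta> * p * enn2real (Ii S n1 \<theta> p f)) powr (1 / p)"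
proof -
  define k where "k = Kfun S n1 t f"
  have k0: "0 \<le> k" unfolding k_def using t by (intro K_nonneg[OF bs]) auto
  have "(\<integral>\<^sup>+ s. ennreal (k powr p * s powr (-\<theta>*p - 1)) * indicator {t..} s \<partial>lborel)
        \<le> Ii S n1 \<theta> p f"
    unfolding Ii_def
  proof (intro nn_integral_mono)
    fix s :: real
    show "ennreal (k powr p * s powr (-\<theta>*p - 1)) * indicator {t..} s
        \<le> ennreal ((s powr (-\<theta>) * Kfun S n1 s f) powr p / s) * indicator {0<..} s"
    proof (cases "t \<le> s")
      case True
      then have s: "s > 0" using t by auto
      have "k \<le> Kfun S n1 s f" unfolding k_def using True t by (intro K_mono[OF bs]) auto
      then have "(s powr (-\<theta>) * k) powr p \<le> (s powr (-\<theta>) * Kfun S n1 s f) powr p"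
        using k0 p by (intro powr_mono2 mult_left_mono) auto
      moreover have "(s powr (-\<theta>) * k) powr p = k powr p * s powr (-\<theta>*p)"
        using k0 s by (simp add: powr_mult powr_powr mult.commute)
      moreover have "s powr (-\<theta>*p - 1) = s powr (-\<theta>*p) / s"
        using s by (simp add: powr_diff)
      ultimately have "k powr p * s powr (-\<theta>*p - 1) \<le> (s powr (-\<theta>) * Kfun S n1 s f) powr p / s"
        using s by (simp add: divide_right_mono)
      then show ?thesis using True s by (auto simp: indicator_def)
    qed (auto simp: indicator_def)
  qed
  moreover have "(\<integral>\<^sup>+ s. ennreal (k powr p * s powr (-\<theta>*p - 1)) * indicator {t..} s \<partial>lborel)
       = ennreal (k powr p * (-(t powr (-\<theta>*p - 1 + 1)) / (-\<theta>*p - 1 + 1)))"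
    using th p t by (intro J2) auto
  ultimately have le: "ennreal (k powr p * (t powr (-\<theta>*p) / (\<theta>*p))) \<le> Ii S n1 \<theta> p f"
    by simp
  have "k powr p * (t powr (-\<theta>*p) / (\<theta>*p)) \<le> enn2real (Ii S n1 \<theta> p f)"
  proof -
    have "0 \<le> k powr p * (t powr (-\<theta>*p) / (\<theta>*p))" using th p by simp
    moreover have "Ii S n1 \<theta> p f < top" using fin by (simp add: less_top[symmetric])
    ultimately show ?thesis using enn2real_mono[OF le] by simp
  qed
  then have "(t powr (-\<theta>) * k) powr p \<le> \<theta> * p * enn2real (Ii S n1 \<theta> p f)"
    using th p t k0 by (simp add: powr_mult powr_powr field_simps mult.commute)
  then have "((t powr (-\<theta>) * k) powr p) powr (1/p) \<le> (\<theta> * p * enn2real (Ii S n1 \<theta> p f)) powr (1/p)"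
    using p by (intro powr_mono2) auto
  moreover have "((t powr (-\<theta>) * k) powr p) powr (1/p) = t powr (-\<theta>) * k"
    using p k0 by (simp add: powr_powr)
  ultimately show ?thesis unfolding k_def by simp
qed

end


context
  fixes S :: "'a::banach set" and n1
  assumes bs: "banach_subspace S n1"
begin

lemma Kg_bounds:
  assumes th: "0 < \<theta>" "\<theta> \<le> \<theta>i" "\<theta>i < 1" and e: "\<epsilon> > 0" and g: "g \<in> S"
    and gk: "norm (f - g) + \<epsilon> * n1 g \<le> 2 * Kfun S n1 \<epsilon> f"
    and M: "\<And>t. t > 0 \<Longrightarrow> t powr (-\<theta>) * Kfun S n1 t f \<le> M"
    and t: "t > 0"
  shows "t \<le> \<epsilon> \<Longrightarrow> t powr (-\<theta>i) * Kfun S n1 t g \<le> 2 * M * \<epsilon> powr (\<theta> - 1) * t powr (1 - \<theta>i)"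
    and "\<epsilon> \<le> t \<Longrightarrow> t powr (-\<theta>i) * Kfun S n1 t g \<le> 3 * \<epsilon> powr (\<theta> - \<theta>i) * (t powr (-\<theta>) * Kfun S n1 t f)"
proof -
  define k where "k = Kfun S n1 \<epsilon> f"
  have n1g: "0 \<le> n1 g" using bs_props(2)[OF bs g] .
  have kM: "k \<le> \<epsilon> powr \<theta> * M"
  proof -
    have "\<epsilon> powr (-\<theta>) * k \<le> M" unfolding k_def using M e by auto
    then have "\<epsilon> powr \<theta> * (\<epsilon> powr (-\<theta>) * k) \<le> \<epsilon> powr \<theta> * M" by (intro mult_left_mono) auto
    then show ?thesis using e by (simp add: powr_minus field_simps)
  qed
  {
    assume te: "t \<le> \<epsilon>"
    have "Kfun S n1 t g \<le> t * n1 g" using K_self[OF bs g] t by auto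
    also have "\<epsilon> * n1 g \<le> 2 * k" using gk norm_ge_zero[of "f - g"] unfolding k_def by linarith
    then have "n1 g \<le> 2 * k / \<epsilon>" using e by (simp add: pos_le_divide_eq mult.commute)
    then have "t * n1 g \<le> t * (2 * k / \<epsilon>)" using t by (intro mult_left_mono) auto
    also have "\<dots> \<le> t * (2 * (\<epsilon> powr \<theta> * M) / \<epsilon>)" using kM t e
      by (intro mult_left_mono divide_right_mono) auto
    also have "\<dots> = 2 * M * \<epsilon> powr (\<theta> - 1) * t" using e by (simp add: powr_diff field_simps)
    finally have "t powr (-\<theta>i) * Kfun S n1 t g \<le> t powr (-\<theta>i) * (2 * M * \<epsilon> powr (\<theta> - 1) * t)"
      by (intro mult_left_mono) auto
    also have "\<dots> = 2 * M * \<epsilon> powr (\<theta> - 1) * t powr (1 - \<theta>i)"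
      using t by (simp add: powr_diff powr_minus field_simps)
    finally show "t powr (-\<theta>i) * Kfun S n1 t g \<le> 2 * M * \<epsilon> powr (\<theta> - 1) * t powr (1 - \<theta>i)" .
  }
  {
    assume et: "\<epsilon> \<le> t"
    have kt: "k \<le> Kfun S n1 t f" unfolding k_def using et e by (intro K_mono[OF bs]) auto
    have Kt0: "0 \<le> Kfun S n1 t f" using t by (intro K_nonneg[OF bs]) auto
    have "Kfun S n1 t g \<le> Kfun S n1 t f + norm (f - g)" using K_tri[OF bs] t by auto
    also have "norm (f - g) \<le> 2 * k" using gk e n1g unfolding k_def
      by (smt (verit) mult_nonneg_nonneg)
    finally have Kg: "Kfun S n1 t g \<le> 3 * Kfun S n1 t f" using kt by simp
    have pw: "t powr (-\<theta>i) = t powr (-\<theta>) * t powr (\<theta> - \<theta>i)" using t by (simp flip: powr_add)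
    have "t powr (\<theta> - \<theta>i) \<le> \<epsilon> powr (\<theta> - \<theta>i)" using th e et by (intro powr_mono2') auto
    have "t powr (-\<theta>i) * Kfun S n1 t g \<le> t powr (-\<theta>i) * (3 * Kfun S n1 t f)"
      using Kg by (intro mult_left_mono) auto
    also have "\<dots> = 3 * t powr (\<theta> - \<theta>i) * (t powr (-\<theta>) * Kfun S n1 t f)" unfolding pw by simp
    also have "\<dots> \<le> 3 * \<epsilon> powr (\<theta> - \<theta>i) * (t powr (-\<theta>) * Kfun S n1 t f)"
      using \<open>t powr (\<theta> - \<theta>i) \<le> \<epsilon> powr (\<theta> - \<theta>i)\<close> Kt0
      by (intro mult_right_mono mult_left_mono) auto
    finally show "t powr (-\<theta>i) * Kfun S n1 t g \<le> 3 * \<epsilon> powr (\<theta> - \<theta>i) * (t powr (-\<theta>) * Kfun S n1 t f)" .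
  }
qed

end


context
  fixes S :: "'a::banach set" and n1
  assumes bs: "banach_subspace S n1"
begin

lemma G_fin:
  assumes th: "0 < \<theta>" "\<theta> \<le> \<theta>i" "\<theta>i < 1" and e: "\<epsilon> > 0" and g: "g \<in> S"
    and gk: "norm (f - g) + \<epsilon> * n1 g \<le> 2 * Kfun S n1 \<epsilon> f"
    and M: "\<And>t. t > 0 \<Longrightarrow> t powr (-\<theta>) * Kfun S n1 t f \<le> M" and M0: "0 \<le> M"
    and p: "p \<ge> 1" and fin: "Ii S n1 \<theta> p f \<noteq> \<infinity>"
  shows "Ii S n1 \<theta>i p g \<le> ennreal ((2 * M * \<epsilon> powr (\<theta> - 1)) powr p * (\<epsilon> powr ((1 - \<theta>i) * p) / ((1 - \<theta>i) * p))
            + (3 * \<epsilon> powr (\<theta> - \<theta>i)) powr p * enn2real (Ii S n1 \<theta> p f))"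
proof -
  define c1 where "c1 = (2 * M * \<epsilon> powr (\<theta> - 1)) powr p"
  define c2 where "c2 = (3 * \<epsilon> powr (\<theta> - \<theta>i)) powr p"
  define r where "r = (1 - \<theta>i) * p"
  define H where "H = (\<lambda>t. (t powr (-\<theta>) * Kfun S n1 (max t \<epsilon>) f) powr p / t)"
  have r0: "r > 0" unfolding r_def using th p by auto
  have c10: "c1 \<ge> 0" "c2 \<ge> 0" unfolding c1_def c2_def by auto
  have monoK: "mono (\<lambda>t. Kfun S n1 (max t \<epsilon>) f)"
    by (rule monoI, rule K_mono[OF bs]) (use e in auto)
  have [measurable]: "(\<lambda>t. Kfun S n1 (max t \<epsilon>) f) \<in> borel_measurable borel"
    by (rule borel_measurable_mono[OF monoK])
  have Hm[measurable]: "H \<in> borel_measurable borel" unfolding H_def by measurable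
  have pt: "ennreal ((t powr (-\<theta>i) * Kfun S n1 t g) powr p / t) * indicator {0<..} t
     \<le> ennreal (c1 * t powr (r - 1)) * indicator {0<..\<epsilon>} t + ennreal c2 * (ennreal (H t) * indicator {\<epsilon><..} t)"
    for t :: real
  proof (cases "t > 0")
    case t: True
    have Kg0: "0 \<le> Kfun S n1 t g" using t by (intro K_nonneg[OF bs]) auto
    show ?thesis
    proof (cases "t \<le> \<epsilon>")
      case True
      have "t powr (-\<theta>i) * Kfun S n1 t g \<le> 2 * M * \<epsilon> powr (\<theta> - 1) * t powr (1 - \<theta>i)"
        using Kg_bounds(1)[OF bs th e g gk M t True] by auto
      then have "(t powr (-\<theta>i) * Kfun S n1 t g) powr p \<le> (2 * M * \<epsilon> powr (\<theta> - 1) * t powr (1 - \<theta>i)) powr p"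
        using Kg0 p by (intro powr_mono2) auto
      also have "\<dots> = c1 * t powr r" unfolding c1_def r_def using M0 t e
        by (simp add: powr_mult powr_powr)
      finally have "(t powr (-\<theta>i) * Kfun S n1 t g) powr p / t \<le> c1 * t powr r / t"
        using t by (intro divide_right_mono) auto
      also have "\<dots> = c1 * t powr (r - 1)" using t by (simp add: powr_diff)
      finally show ?thesis using t True by (auto simp: indicator_def intro!: ennreal_leI)
    next
      case False
      have Kf0: "0 \<le> Kfun S n1 t f" using t by (intro K_nonneg[OF bs]) auto
      have "t powr (-\<theta>i) * Kfun S n1 t g \<le> 3 * \<epsilon> powr (\<theta> - \<theta>i) * (t powr (-\<theta>) * Kfun S n1 t f)"
        using Kg_bounds(2)[OF bs th e g gk M t] False by auto
      then have "(t powr (-\<theta>i) * Kfun S n1 t g) powr p \<le> (3 * \<epsilon> powr (\<theta> - \<theta>i) * (t powr (-\<theta>) * Kfun S n1 t f)) powr p"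
        using Kg0 p by (intro powr_mono2) auto
      also have "\<dots> = c2 * (t powr (-\<theta>) * Kfun S n1 t f) powr p" unfolding c2_def using Kf0 t e
        by (simp add: powr_mult)
      finally have "(t powr (-\<theta>i) * Kfun S n1 t g) powr p / t \<le> c2 * ((t powr (-\<theta>) * Kfun S n1 t f) powr p / t)"
        using t by (simp add: divide_right_mono)
      moreover have "H t = (t powr (-\<theta>) * Kfun S n1 t f) powr p / t" unfolding H_def using False by simp
      ultimately show ?thesis using t False c10
        by (auto simp: indicator_def ennreal_mult'[symmetric] intro!: ennreal_leI)
    qed
  qed (auto simp: indicator_def)
  have "Ii S n1 \<theta>i p g \<le> (\<integral>\<^sup>+ t. ennreal (c1 * t powr (r - 1)) * indicator {0<..\<epsilon>} t + ennreal c2 * (ennreal (H t) * indicator {\<epsilon><..} t) \<partial>lborel)"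
    unfolding Ii_def by (intro nn_integral_mono pt)
  also have "\<dots> = (\<integral>\<^sup>+ t. ennreal (c1 * t powr (r - 1)) * indicator {0<..\<epsilon>} t \<partial>lborel)
        + ennreal c2 * (\<integral>\<^sup>+ t. ennreal (H t) * indicator {\<epsilon><..} t \<partial>lborel)"
    by (subst nn_integral_add) (auto simp: nn_integral_cmult)
  finally have A: "Ii S n1 \<theta>i p g \<le> (\<integral>\<^sup>+ t. ennreal (c1 * t powr (r - 1)) * indicator {0<..\<epsilon>} t \<partial>lborel)
        + ennreal c2 * (\<integral>\<^sup>+ t. ennreal (H t) * indicator {\<epsilon><..} t \<partial>lborel)" .
  have B: "(\<integral>\<^sup>+ t. ennreal (H t) * indicator {\<epsilon><..} t \<partial>lborel) \<le> Ii S n1 \<theta> p f"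
    unfolding Ii_def
  proof (intro nn_integral_mono)
    fix t :: real
    show "ennreal (H t) * indicator {\<epsilon><..} t \<le> ennreal ((t powr (-\<theta>) * Kfun S n1 t f) powr p / t) * indicator {0<..} t"
      using e by (cases "\<epsilon> < t") (auto simp: indicator_def H_def)
  qed
  have C: "(\<integral>\<^sup>+ t. ennreal (c1 * t powr (r - 1)) * indicator {0<..\<epsilon>} t \<partial>lborel) \<le> ennreal (c1 * (\<epsilon> powr r / r))"
    by (rule J1) (use r0 e c10 in auto)
  have "Ii S n1 \<theta>i p g \<le> ennreal (c1 * (\<epsilon> powr r / r)) + ennreal c2 * Ii S n1 \<theta> p f"
    using A add_mono[OF C mult_left_mono[OF B]] by (rule order_trans) simp
  also have "Ii S n1 \<theta> p f = ennreal (enn2real (Ii S n1 \<theta> p f))" using fin by (simp add: ennreal_enn2real_if)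
  finally have F: "Ii S n1 \<theta>i p g \<le> ennreal (c1 * (\<epsilon> powr r / r)) + ennreal c2 * ennreal (enn2real (Ii S n1 \<theta> p f))" .
  have "ennreal (c1 * (\<epsilon> powr r / r) + c2 * enn2real (Ii S n1 \<theta> p f))
      = ennreal (c1 * (\<epsilon> powr r / r)) + ennreal c2 * ennreal (enn2real (Ii S n1 \<theta> p f))"
    using c10 r0 by (simp add: ennreal_plus ennreal_mult)
  with F show ?thesis unfolding c1_def c2_def r_def by simp
qed

end


definition cE :: "ennreal \<Rightarrow> real \<Rightarrow> real" where
  "cE q \<theta> = (if q = \<infinity> then 1 else (\<theta> * enn2real q) powr (1 / enn2real q))"

definition EE :: "ennreal \<Rightarrow> real \<Rightarrow> real \<Rightarrow> real" where
  "EE q \<theta> \<theta>i = (if q = \<infinity> then 3 else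
      (2 powr (enn2real q) * \<theta> / (1 - \<theta>i) + 3 powr (enn2real q)) powr (1 / enn2real q))"

lemma cE_nonneg: "0 \<le> cE q \<theta>" unfolding cE_def by auto
lemma EE_nonneg: "0 \<le> EE q \<theta> \<theta>i" unfolding EE_def by auto

lemma p_ge1: "1 \<le> q \<Longrightarrow> q \<noteq> \<infinity> \<Longrightarrow> 1 \<le> enn2real q"
  using enn2real_mono[of 1 q] by (simp add: less_top)

context
  fixes S :: "'a::banach set" and n1
  assumes bs: "banach_subspace S n1"
begin

lemma nrm_fin:
  assumes "q \<noteq> \<infinity>" "Ii S n1 \<theta> (enn2real q) h \<noteq> \<infinity>"
  shows "interp_nrm S n1 \<theta> q h = (enn2real (Ii S n1 \<theta> (enn2real q) h)) powr (1 / enn2real q)"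
  using assms by (simp add: interp_norm_fin)

lemma LemE:
  assumes q: "1 \<le> q" and th: "0 < \<theta>" and f: "f \<in> interp_space S n1 \<theta> q" and t: "t > 0"
  shows "t powr (-\<theta>) * Kfun S n1 t f \<le> cE q \<theta> * interp_nrm S n1 \<theta> q f"
proof (cases "q = \<infinity>")
  case True
  have Kt0: "0 \<le> Kfun S n1 t f" using t by (intro K_nonneg[OF bs]) auto
  have fin: "interp_norm S n1 \<theta> q f < \<infinity>" using f unfolding interp_space_def by simp
  have "ennreal (t powr (-\<theta>) * Kfun S n1 t f) \<le> interp_norm S n1 \<theta> q f"
    unfolding interp_norm_def using True t by (auto intro: SUP_upper)
  then have "enn2real (ennreal (t powr (-\<theta>) * Kfun S n1 t f)) \<le> interp_nrm S n1 \<theta> q f"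
    using fin by (intro enn2real_mono) auto
  then show ?thesis using True Kt0 by (simp add: cE_def)
next
  case False
  define p where "p = enn2real q"
  have p: "1 \<le> p" unfolding p_def using p_ge1[OF q False] .
  have fin0: "interp_norm S n1 \<theta> q f < \<infinity>" using f unfolding interp_space_def by simp
  have fin: "Ii S n1 \<theta> p f \<noteq> \<infinity>"
    using fin0 False unfolding p_def by (auto simp: interp_norm_fin split: if_splits)
  have "t powr (-\<theta>) * Kfun S n1 t f \<le> (\<theta> * p * enn2real (Ii S n1 \<theta> p f)) powr (1 / p)"
    by (rule E_fin[OF bs p th fin t])
  also have "\<dots> = (\<theta> * p) powr (1/p) * (enn2real (Ii S n1 \<theta> p f)) powr (1 / p)"
    using th p by (simp add: powr_mult)
  also have "\<dots> = cE q \<theta> * interp_nrm S n1 \<theta> q f"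
    using nrm_fin[OF False] fin False unfolding cE_def p_def by simp
  finally show ?thesis .
qed

lemma LemG:
  assumes q: "1 \<le> q" and th: "0 < \<theta>" "\<theta> \<le> \<theta>i" "\<theta>i < 1" and e: "\<epsilon> > 0" and g: "g \<in> S"
    and gk: "norm (f - g) + \<epsilon> * n1 g \<le> 2 * Kfun S n1 \<epsilon> f"
    and f: "f \<in> interp_space S n1 \<theta> q"
  shows "interp_nrm S n1 \<theta>i q g \<le> EE q \<theta> \<theta>i * \<epsilon> powr (\<theta> - \<theta>i) * interp_nrm S n1 \<theta> q f"
proof -
  define A where "A = interp_nrm S n1 \<theta> q f"
  define M where "M = cE q \<theta> * A"
  have A0: "0 \<le> A" unfolding A_def by simp
  have M0: "0 \<le> M" unfolding M_def using A0 cE_nonneg by simp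
  have Mb: "\<And>t. t > 0 \<Longrightarrow> t powr (-\<theta>) * Kfun S n1 t f \<le> M"
    unfolding M_def A_def using LemE[OF q th(1) f] by auto
  show ?thesis
  proof (cases "q = \<infinity>")
    case True
    have "interp_norm S n1 \<theta>i q g \<le> ennreal (3 * \<epsilon> powr (\<theta> - \<theta>i) * A)"
      unfolding interp_norm_def using True
    proof (simp, intro SUP_least ennreal_leI)
      fix t :: real assume t: "t \<in> {0<..}"
      then have t: "t > 0" by simp
      have M1: "M = A" unfolding M_def cE_def using True by simp
      show "t powr (-\<theta>i) * Kfun S n1 t g \<le> 3 * \<epsilon> powr (\<theta> - \<theta>i) * A"
      proof (cases "t \<le> \<epsilon>")
        case True
        have "t powr (-\<theta>i) * Kfun S n1 t g \<le> 2 * M * \<epsilon> powr (\<theta> - 1) * t powr (1 - \<theta>i)"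
          by (rule Kg_bounds(1)[OF bs th e g gk Mb t True])
        also have "\<dots> \<le> 2 * M * \<epsilon> powr (\<theta> - 1) * \<epsilon> powr (1 - \<theta>i)"
          using M0 t True th by (intro mult_left_mono powr_mono2) auto
        also have "\<dots> = 2 * M * \<epsilon> powr (\<theta> - \<theta>i)"
          using e by (simp flip: powr_add)
        also have "\<dots> \<le> 3 * \<epsilon> powr (\<theta> - \<theta>i) * A" using M1 A0 by simp
        finally show ?thesis .
      next
        case False
        have "t powr (-\<theta>i) * Kfun S n1 t g \<le> 3 * \<epsilon> powr (\<theta> - \<theta>i) * (t powr (-\<theta>) * Kfun S n1 t f)"
          using Kg_bounds(2)[OF bs th e g gk Mb t] False by simp
        also have "\<dots> \<le> 3 * \<epsilon> powr (\<theta> - \<theta>i) * A"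
          using Mb[OF t] M1 by (intro mult_left_mono) auto
        finally show ?thesis .
      qed
    qed
    then have "interp_nrm S n1 \<theta>i q g \<le> enn2real (ennreal (3 * \<epsilon> powr (\<theta> - \<theta>i) * A))"
      by (intro enn2real_mono) auto
    then show ?thesis using True A0 unfolding A_def EE_def by simp
  next
    case False
    define p where "p = enn2real q"
    have p: "1 \<le> p" unfolding p_def using p_ge1[OF q False] .
    have fin0: "interp_norm S n1 \<theta> q f < \<infinity>" using f unfolding interp_space_def by simp
    have fin: "Ii S n1 \<theta> p f \<noteq> \<infinity>"
      using fin0 False unfolding p_def by (auto simp: interp_norm_fin split: if_splits)
    define J where "J = enn2real (Ii S n1 \<theta> p f)"
    have J0: "0 \<le> J" unfolding J_def by simp
    have AJ: "A = J powr (1/p)" unfolding A_def J_def p_def using nrm_fin[OF False fin[unfolded p_def]] by simp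
    define B where "B = (2 * M * \<epsilon> powr (\<theta> - 1)) powr p * (\<epsilon> powr ((1 - \<theta>i) * p) / ((1 - \<theta>i) * p))
            + (3 * \<epsilon> powr (\<theta> - \<theta>i)) powr p * J"
    have B0: "0 \<le> B" unfolding B_def using J0 th p by auto
    have IB: "Ii S n1 \<theta>i p g \<le> ennreal B"
      unfolding B_def J_def by (rule G_fin[OF bs th e g gk Mb M0 p fin])
    have Ifin: "Ii S n1 \<theta>i p g \<noteq> \<infinity>" using IB by (auto simp: top_unique)
    have "interp_nrm S n1 \<theta>i q g = (enn2real (Ii S n1 \<theta>i p g)) powr (1/p)"
      using nrm_fin[OF False Ifin[unfolded p_def]] unfolding p_def by simp
    also have "\<dots> \<le> B powr (1/p)"
      using IB B0 p by (intro powr_mono2) (auto simp: enn2real_leI)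
    also have "B = \<epsilon> powr ((\<theta> - \<theta>i) * p) * J * (2 powr p * \<theta> / (1 - \<theta>i) + 3 powr p)"
    proof -
      have Mp: "M powr p = \<theta> * p * J"
        unfolding M_def cE_def AJ using False th p J0
        by (simp add: p_def[symmetric] powr_mult[symmetric] powr_powr)
      have "(2 * M * \<epsilon> powr (\<theta> - 1)) powr p = 2 powr p * M powr p * \<epsilon> powr ((\<theta> - 1) * p)"
        using M0 e by (simp add: powr_mult powr_powr)
      moreover have "(3 * \<epsilon> powr (\<theta> - \<theta>i)) powr p = 3 powr p * \<epsilon> powr ((\<theta> - \<theta>i) * p)"
        using e by (simp add: powr_mult powr_powr)
      moreover have "\<epsilon> powr ((\<theta> - 1) * p) * \<epsilon> powr ((1 - \<theta>i) * p) = \<epsilon> powr ((\<theta> - \<theta>i) * p)"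
        using e by (simp add: powr_add[symmetric] algebra_simps)
      ultimately show ?thesis unfolding B_def Mp using th p
        by (simp add: field_simps)
    qed
    also have "(\<epsilon> powr ((\<theta> - \<theta>i) * p) * J * (2 powr p * \<theta> / (1 - \<theta>i) + 3 powr p)) powr (1/p)
        = \<epsilon> powr (\<theta> - \<theta>i) * A * EE q \<theta> \<theta>i"
      unfolding AJ EE_def using False J0 th p
      by (simp add: p_def[symmetric] powr_mult powr_powr)
    finally show ?thesis unfolding A_def by (simp add: mult.commute mult.left_commute)
  qed
qed

end


theorem lemma2p2:
  fixes S :: "'a::banach set" and n1 :: "'a \<Rightarrow> real"
    and q :: ennreal and n :: nat and \<theta> :: "nat \<Rightarrow> real" and C0 C1 :: real
  assumes "banach_subspace S n1"
    and "1 \<le> q"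
    and "1 \<le> n"
    and "0 < \<theta> 1" and "\<theta> n < 1"
    and "\<forall>i j. 1 \<le> i \<and> i < j \<and> j \<le> n \<longrightarrow> \<theta> i < \<theta> j"
    and "0 < C0" and "0 < C1"
  shows "\<exists>C>0. \<forall>(l::'a \<Rightarrow> real) (\<epsilon>::real).
           bounded_linear l \<and> 0 < \<epsilon> \<and>
           (\<forall>f. \<bar>l f\<bar> \<le> C0 * norm f) \<and>
           (\<forall>f\<in>S. \<bar>l f\<bar> \<le> C1 * ((\<Sum>i=1..n. \<epsilon> powr (\<theta> i) * interp_nrm S n1 (\<theta> i) q f) + \<epsilon> * n1 f))
           \<longrightarrow> (\<forall>f\<in>interp_space S n1 (\<theta> 1) q.
                  \<bar>l f\<bar> \<le> C * \<epsilon> powr (\<theta> 1) * interp_nrm S n1 (\<theta> 1) q f)"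
proof -
  note bs = assms(1)
  define th where "th = \<theta> 1"
  define c where "c = cE q th"
  define SE where "SE = (\<Sum>i=1..n. EE q th (\<theta> i))"
  define C where "C = 2 * C0 * c + C1 * (SE + 2 * c) + 1"
  have c0: "0 \<le> c" unfolding c_def by (rule cE_nonneg)
  have SE0: "0 \<le> SE" unfolding SE_def by (intro sum_nonneg EE_nonneg)
  have C0': "0 < C" unfolding C_def 
  proof -
    have "0 \<le> 2 * C0 * c" using c0 assms(7) by simp
    moreover have "0 \<le> C1 * (SE + 2 * c)" using c0 SE0 assms(8) by simp
    ultimately show "0 < 2 * C0 * c + C1 * (SE + 2 * c) + 1" by linarith
  qed
  have thi: "th \<le> \<theta> i \<and> \<theta> i < 1" if i: "i \<in> {1..n}" for i
  proof -
    have "th \<le> \<theta> i" unfolding th_def using i assms(6) by (cases "i = 1") (auto simp: less_imp_le)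
    moreover have "\<theta> i \<le> \<theta> n" using i assms(6) by (cases "i = n") (auto simp: less_imp_le)
    ultimately show ?thesis using assms(5) by auto
  qed
  have th0: "0 < th" unfolding th_def using assms(4) .
  have main: "\<bar>l f\<bar> \<le> C * \<epsilon> powr th * interp_nrm S n1 th q f"
    if l: "bounded_linear l" and e: "0 < \<epsilon>" and H0: "\<forall>f. \<bar>l f\<bar> \<le> C0 * norm f"
      and H1: "\<forall>f\<in>S. \<bar>l f\<bar> \<le> C1 * ((\<Sum>i=1..n. \<epsilon> powr (\<theta> i) * interp_nrm S n1 (\<theta> i) q f) + \<epsilon> * n1 f)"
      and f: "f \<in> interp_space S n1 th q" for l \<epsilon> f
  proof -
    define A where "A = interp_nrm S n1 th q f"
    define k where "k = Kfun S n1 \<epsilon> f"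
    have A0: "0 \<le> A" unfolding A_def by simp
    have k0: "0 \<le> k" unfolding k_def using e by (intro K_nonneg[OF bs]) auto
    have RHS0: "0 \<le> C * \<epsilon> powr th * A" using C0' A0 by simp
    show ?thesis
    proof (cases "k = 0")
      case True
      have "Kfun S n1 1 f \<le> 0"
      proof (cases "\<epsilon> \<le> 1")
        case True
        then have "Kfun S n1 1 f \<le> (1 / \<epsilon>) * k" unfolding k_def using e by (intro K_scale[OF bs]) auto
        then show ?thesis using \<open>k = 0\<close> by simp
      next
        case False
        then have "Kfun S n1 1 f \<le> k" unfolding k_def by (intro K_mono[OF bs]) auto
        then show ?thesis using \<open>k = 0\<close> by simp
      qed
      moreover have "0 \<le> Kfun S n1 1 f" by (intro K_nonneg[OF bs]) auto
      ultimately have "f = 0" using K_zero[OF bs] by simp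
      then have "l f = 0" using l by (simp add: linear_simps)
      then show ?thesis using RHS0 unfolding A_def by simp
    next
      case False
      then have kpos: "k < 2 * k" using k0 by simp
      obtain g where g: "g \<in> S" "norm (f - g) + \<epsilon> * n1 g < 2 * k"
        using K_less[OF bs _ kpos[unfolded k_def]] e unfolding k_def by auto
      have n1g: "0 \<le> n1 g" using bs_props(2)[OF bs g(1)] .
      have gk: "norm (f - g) + \<epsilon> * n1 g \<le> 2 * Kfun S n1 \<epsilon> f" using g unfolding k_def by simp
      have kb: "k \<le> \<epsilon> powr th * (c * A)"
      proof -
        have "\<epsilon> powr (-th) * k \<le> c * A" unfolding k_def c_def A_def
          by (rule LemE[OF bs assms(2) th0 f e])
        then have "\<epsilon> powr th * (\<epsilon> powr (-th) * k) \<le> \<epsilon> powr th * (c * A)" by (intro mult_left_mono) auto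
        then show ?thesis using e by (simp add: powr_minus field_simps)
      qed
      have gi: "\<epsilon> powr (\<theta> i) * interp_nrm S n1 (\<theta> i) q g \<le> EE q th (\<theta> i) * (\<epsilon> powr th * A)"
        if i: "i \<in> {1..n}" for i
      proof -
        have "interp_nrm S n1 (\<theta> i) q g \<le> EE q th (\<theta> i) * \<epsilon> powr (th - \<theta> i) * A"
          unfolding A_def using thi[OF i] by (intro LemG[OF bs assms(2) th0 _ _ e g(1) gk f]) auto
        then have "\<epsilon> powr (\<theta> i) * interp_nrm S n1 (\<theta> i) q g \<le> \<epsilon> powr (\<theta> i) * (EE q th (\<theta> i) * \<epsilon> powr (th - \<theta> i) * A)"
          by (intro mult_left_mono) auto
        also have "\<dots> = EE q th (\<theta> i) * ((\<epsilon> powr (\<theta> i) * \<epsilon> powr (th - \<theta> i)) * A)" by simp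
        also have "\<epsilon> powr (\<theta> i) * \<epsilon> powr (th - \<theta> i) = \<epsilon> powr th" by (simp flip: powr_add)
        finally show ?thesis .
      qed
      have sumb: "(\<Sum>i=1..n. \<epsilon> powr (\<theta> i) * interp_nrm S n1 (\<theta> i) q g) \<le> SE * (\<epsilon> powr th * A)"
        unfolding SE_def sum_distrib_right by (intro sum_mono gi)
      have "l f = l (f - g) + l g" using l by (simp add: linear_simps)
      then have "\<bar>l f\<bar> \<le> \<bar>l (f - g)\<bar> + \<bar>l g\<bar>" by simp
      also have "\<dots> \<le> C0 * norm (f - g) + C1 * ((\<Sum>i=1..n. \<epsilon> powr (\<theta> i) * interp_nrm S n1 (\<theta> i) q g) + \<epsilon> * n1 g)"
        using H0 H1 g(1) by (intro add_mono) auto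
      also have "\<dots> \<le> C0 * (2 * k) + C1 * (SE * (\<epsilon> powr th * A) + 2 * k)"
      proof (intro add_mono mult_left_mono)
        show "norm (f - g) \<le> 2 * k" using g n1g e by (smt (verit) mult_nonneg_nonneg)
        show "\<epsilon> * n1 g \<le> 2 * k" using g norm_ge_zero[of "f - g"] by linarith
      qed (use sumb assms(7,8) in auto)
      also have "\<dots> \<le> C0 * (2 * (\<epsilon> powr th * (c * A))) + C1 * (SE * (\<epsilon> powr th * A) + 2 * (\<epsilon> powr th * (c * A)))"
        using kb assms(7,8) SE0 by (intro add_mono mult_left_mono) auto
      also have "\<dots> = (2 * C0 * c + C1 * (SE + 2 * c)) * (\<epsilon> powr th * A)" by (simp add: algebra_simps)
      also have "\<dots> \<le> C * (\<epsilon> powr th * A)" unfolding C_def using A0 by (intro mult_right_mono) auto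
      finally show ?thesis unfolding A_def by simp
    qed
  qed
  show ?thesis
    by (rule exI[of _ C], intro conjI C0' allI impI ballI) (use main in \<open>auto simp: th_def\<close>)
qed


end
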